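(* Let $g\in V$ be represented by a pair of finite rooted binary trees $(T_-,T_+)$, each with $n\ge 1$ leaves, together with a bijection $\sigma$ of $\{1,\dots,n\}$. Form the closed labelled strand diagram $D_0(g)$ of $g$ as described in the context, and apply labelled Rule I repeatedly, in any order, until no edge goes from a merge vertex to a split vertex. Then the final labelled diagram has at most $n$ connected components, and the sum of all its edge labels is at most $2^{n-1}$.
   Context: The Cantor set $\mathfrak C=\{0,1\}^{\mathbb N}$. A finite rooted binary tree with $n$ leaves, ordered left to right, determines a partition of $\mathfrak C$ into $n$ cones $u_1\mathfrak C,\dots,u_n\mathfrak C$, where $u_i$ is the finite binary address of the $i$-th leaf (left child appends $0$, right child appends $1$). A triple $(T_-,T_+,\sigma)$ represents the element $g$ of Thompson's group $V$ given by $g(u_i w)=v_{\sigma(i)}w$, where $u_i$ (resp. $v_j$) are the leaf addresses of $T_-$ (resp. $T_+$). Closed labelled strand diagram $D_0(g)$: a finite directed graph with $2n-2$ trivalent vertices. The $n-1$ internal nodes of $T_-$ become split vertices (one incoming edge, two outgoing edges ordered left/right), with edges directed from the root toward the leaves; the $n-1$ internal nodes of $T_+$ become merge vertices (two incoming edges ordered left/right, one outgoing edge), with edges directed from the leaves toward the root. The $i$-th leaf of $T_-$ is joined to the $\sigma(i)$-th leaf of $T_+$ (the resulting bivalent points are erased, so each such path becomes a single edge), and finally the root of $T_+$ is joined by an edge to the root of $T_-$ (again erasing bivalent points). If $n=1$ the diagram is a single closed loop with no vertices. Every edge carries a nonnegative integer label: the edge (or loop) passing through the glued roots has label $1$, all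 other edges have label $0$. Labelled Rule I: suppose an edge $e$ with label $y$ goes from a merge vertex $m$ to a split vertex $s$, where $m$ has incoming edges $x_1$ (left) and $x_2$ (right) and $s$ has outgoing edges $z_1$ (left) and $z_2$ (right). Delete $m$, $s$ and $e$, and for $i=1,2$ join the strand $x_i$ directly to the strand $z_i$ (concatenating $x_i$, $e$, $z_i$). The label of each resulting edge is the sum of the labels of all old edge-pieces it is composed of, counted with multiplicity (e.g. if $x_1,x_2,z_1,z_2$ are distinct, the new edges have labels $x_1+y+z_1$ and $x_2+y+z_2$; if $x_2=z_1$, the result is a single edge with label $x_1+x_2+2y+z_2$). Strands that close up on themselves become closed loops (circle components without vertices), whose label is the sum of the labels along them. *)

theory Defs
  imports Main "HOL-Library.Multiset"
begin

datatype btree = Leaf | Node btree btree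

text \<open>Addresses: lists of booleans, False = 0 = left child, True = 1 = right child.
  Leaf addresses listed left to right.\<close>
fun leaves :: "btree \<Rightarrow> bool list list" where
  "leaves Leaf = [[]]"
| "leaves (Node l r) = map (Cons False) (leaves l) @ map (Cons True) (leaves r)"

fun inodes :: "btree \<Rightarrow> bool list set" where
  "inodes Leaf = {}"
| "inodes (Node l r) = insert [] (Cons False ` inodes l \<union> Cons True ` inodes r)"

definition nleaves :: "btree \<Rightarrow> nat" where
  "nleaves T = length (leaves T)"

text \<open>Vertices are named (False, a) for the internal node at address a of T_-
  (split vertices) and (True, b) for the internal node at address b of T_+
  (merge vertices).\<close>
type_synonym vx = "bool \<times> bool list"

text \<open>Ports: a split vertex has in-port PC and out-ports PL (left), PR (right);
  a merge vertex has in-ports PL (left), PR (right) and out-port PC.\<close>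
datatype port = PL | PR | PC

text \<open>A diagram: vertex set; each edge is identified by its source out-port,
  sd_nxt maps an out-port to the in-port the edge ends at; sd_lab gives the label
  of the edge starting at an out-port; sd_loops is the multiset of labels of the
  closed loops (vertex-free circle components).\<close>
record sd =
  sd_verts :: "vx set"
  sd_nxt :: "vx \<times> port \<Rightarrow> vx \<times> port"
  sd_lab :: "vx \<times> port \<Rightarrow> nat"
  sd_loops :: "nat multiset"

definition outports :: "sd \<Rightarrow> (vx \<times> port) set" where
  "outports D = {(v, p). v \<in> sd_verts D \<and> (if fst v then p = PC else p \<noteq> PC)}"

definition mergein :: "bool list \<Rightarrow> vx \<times> port" where
  "mergein b = ((True, butlast b), if last b then PR else PL)"

definition leafidx :: "bool list list \<Rightarrow> bool list \<Rightarrow> nat" where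
  "leafidx us u = (THE i. i < length us \<and> us ! i = u)"

text \<open>Target of the edge leaving the split vertex toward child address c of T_-:
  either the internal node c, or (if c is the i-th leaf, 1-based) the in-port of the
  merge vertex above the sigma(i)-th leaf of T_+.\<close>
definition childtgt :: "btree \<Rightarrow> btree \<Rightarrow> (nat \<Rightarrow> nat) \<Rightarrow> bool list \<Rightarrow> vx \<times> port" where
  "childtgt Tm Tp \<sigma> c =
     (if c \<in> inodes Tm then ((False, c), PC)
      else mergein (leaves Tp ! (\<sigma> (leafidx (leaves Tm) c + 1) - 1)))"

definition D0 :: "btree \<Rightarrow> btree \<Rightarrow> (nat \<Rightarrow> nat) \<Rightarrow> sd" where
  "D0 Tm Tp \<sigma> =
    \<lparr> sd_verts = Pair False ` inodes Tm \<union> Pair True ` inodes Tp,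
      sd_nxt = (\<lambda>(v, p).
         if \<not> fst v then
           (case p of PL \<Rightarrow> childtgt Tm Tp \<sigma> (snd v @ [False])
                    | PR \<Rightarrow> childtgt Tm Tp \<sigma> (snd v @ [True])
                    | PC \<Rightarrow> (v, p))
         else
           (case p of PC \<Rightarrow> (if snd v = [] then ((False, []), PC) else mergein (snd v))
                    | _ \<Rightarrow> (v, p))),
      sd_lab = (\<lambda>q. if q = ((True, []), PC) then 1 else 0),
      sd_loops = (if Tm = Leaf then {#1#} else {#}) \<rparr>"

definition rule1_res :: "sd \<Rightarrow> vx \<Rightarrow> vx \<Rightarrow> sd" where
  "rule1_res D m s =
    (let y = sd_lab D (m, PC);
         cont = (\<lambda>t. if t = (m, PL) then Some (s, PL)
                      else if t = (m, PR) then Some (s, PR) else None);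
         follow = (\<lambda>p. let t0 = sd_nxt D p in
            (case cont t0 of
               None \<Rightarrow> (t0, sd_lab D p)
             | Some q1 \<Rightarrow> let t1 = sd_nxt D q1 in
                 (case cont t1 of
                    None \<Rightarrow> (t1, sd_lab D p + y + sd_lab D q1)
                  | Some q2 \<Rightarrow> (sd_nxt D q2, sd_lab D p + y + sd_lab D q1 + y + sd_lab D q2))));
         a = sd_nxt D (s, PL); b = sd_nxt D (s, PR);
         l1 = sd_lab D (s, PL); l2 = sd_lab D (s, PR);
         newloops = (if a = (m, PL) then {#l1 + y#} else {#})
                  + (if b = (m, PR) then {#l2 + y#} else {#})
                  + (if a = (m, PR) \<and> b = (m, PL) then {#l1 + l2 + 2 * y#} else {#})
     in \<lparr> sd_verts = sd_verts D - {m, s},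
          sd_nxt = (\<lambda>p. fst (follow p)),
          sd_lab = (\<lambda>p. snd (follow p)),
          sd_loops = sd_loops D + newloops \<rparr>)"

definition rule1_step :: "sd \<Rightarrow> sd \<Rightarrow> bool" where
  "rule1_step D D' \<longleftrightarrow>
    (\<exists>m s. m \<in> sd_verts D \<and> fst m \<and> s \<in> sd_verts D \<and> \<not> fst s \<and>
           sd_nxt D (m, PC) = (s, PC) \<and> D' = rule1_res D m s)"

definition terminal :: "sd \<Rightarrow> bool" where
  "terminal D \<longleftrightarrow>
    \<not> (\<exists>m \<in> sd_verts D. \<exists>s \<in> sd_verts D. fst m \<and> \<not> fst s \<and> sd_nxt D (m, PC) = (s, PC))"

definition adjrel :: "sd \<Rightarrow> vx rel" where
  "adjrel D = {(v, w). \<exists>p. (v, p) \<in> outports D \<and> fst (sd_nxt D (v, p)) = w}"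

definition comprel :: "sd \<Rightarrow> vx rel" where
  "comprel D = {(v, w). v \<in> sd_verts D \<and> w \<in> sd_verts D \<and>
                        (v, w) \<in> (adjrel D \<union> (adjrel D)\<inverse>)\<^sup>*}"

definition num_components :: "sd \<Rightarrow> nat" where
  "num_components D = card (sd_verts D // comprel D) + size (sd_loops D)"

definition label_sum :: "sd \<Rightarrow> nat" where
  "label_sum D = (\<Sum>p \<in> outports D. sd_lab D p) + sum_mset (sd_loops D)"

end

theory Submission
  imports Defs
begin


lemma inodes_finite: "finite (inodes T)"
  by (induction T) auto

lemma len_leaves: "length (leaves T) = card (inodes T) + 1"
proof (induction T)
  case Leaf then show ?case by simp
next
  case (Node l r)
  have d: "Cons False ` inodes l \<inter> Cons True ` inodes r = {}" by auto
  have nm: "[] \<notin> Cons False ` inodes l \<union> Cons True ` inodes r" by auto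
  have "card (inodes (Node l r)) = Suc (card (Cons False ` inodes l) + card (Cons True ` inodes r))"
    using d nm by (simp add: inodes_finite card_Un_disjoint)
  also have "\<dots> = Suc (card (inodes l) + card (inodes r))"
    by (simp add: card_image)
  finally show ?case using Node by simp
qed

lemma distinct_leaves: "distinct (leaves T)"
  by (induction T) (auto simp: distinct_map)

lemma leaves_inodes_disj: "x \<in> set (leaves T) \<Longrightarrow> x \<notin> inodes T"
  by (induction T arbitrary: x) auto

lemma root_in: "[] \<in> inodes T \<or> [] \<in> set (leaves T)"
  by (cases T) auto

lemma child_in: "a \<in> inodes T \<Longrightarrow> a @ [x] \<in> inodes T \<or> a @ [x] \<in> set (leaves T)"
proof (induction T arbitrary: a)
  case Leaf then show ?case by simp
next
  case (Node l r)
  show ?case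
  proof (cases a)
    case Nil
    then show ?thesis using root_in[of l] root_in[of r] by (cases x) auto
  next
    case (Cons b a')
    show ?thesis
    proof (cases b)
      case True
      then show ?thesis using Node.prems Node.IH(2)[of a'] Cons by auto
    next
      case False
      then show ?thesis using Node.prems Node.IH(1)[of a'] Cons by auto
    qed
  qed
qed

lemma parent_in: "c \<in> inodes T \<or> c \<in> set (leaves T) \<Longrightarrow> c \<noteq> [] \<Longrightarrow> butlast c \<in> inodes T"
proof (induction T arbitrary: c)
  case Leaf then show ?case by simp
next
  case (Node l r)
  then obtain x c' where c: "c = x # c'" by (cases c) auto
  show ?case
  proof (cases "c' = []")
    case True then show ?thesis using c by simp
  next
    case False
    then show ?thesis using Node c by (cases x) auto
  qed
qed

lemma nonleaf_root: "T \<noteq> Leaf \<Longrightarrow> [] \<in> inodes T"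
  by (cases T) auto

lemma leaf_nonempty: "T \<noteq> Leaf \<Longrightarrow> c \<in> set (leaves T) \<Longrightarrow> c \<noteq> []"
  by (cases T) auto

lemma nleaves_pos: "nleaves T \<ge> 1"
  by (simp add: nleaves_def len_leaves)

lemma nleaves_Node: "nleaves (Node l r) \<ge> 2"
  using nleaves_pos[of l] nleaves_pos[of r] by (simp add: nleaves_def)

lemma leafidx_nth: "distinct us \<Longrightarrow> i < length us \<Longrightarrow> leafidx us (us ! i) = i"
  unfolding leafidx_def by (rule the_equality) (auto simp: nth_eq_iff_index_eq)



definition inports :: "sd \<Rightarrow> (vx \<times> port) set" where
  "inports D = {(v, p). v \<in> sd_verts D \<and> (if fst v then p \<noteq> PC else p = PC)}"

definition WF :: "sd \<Rightarrow> bool" where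
  "WF D \<longleftrightarrow> finite (sd_verts D) \<and> bij_betw (sd_nxt D) (outports D) (inports D)"

lemma F1: "sd_nxt D p \<noteq> (m,PL) \<Longrightarrow> sd_nxt D p \<noteq> (m,PR) \<Longrightarrow>
   sd_nxt (rule1_res D m s) p = sd_nxt D p \<and> sd_lab (rule1_res D m s) p = sd_lab D p"
  by (simp add: rule1_res_def Let_def)

lemma F2: "sd_nxt D p = (m,PL) \<Longrightarrow> sd_nxt D (s,PL) \<noteq> (m,PL) \<Longrightarrow> sd_nxt D (s,PL) \<noteq> (m,PR) \<Longrightarrow>
   sd_nxt (rule1_res D m s) p = sd_nxt D (s,PL) \<and>
   sd_lab (rule1_res D m s) p = sd_lab D p + sd_lab D (m,PC) + sd_lab D (s,PL)"
  by (simp add: rule1_res_def Let_def)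

lemma F3: "sd_nxt D p = (m,PL) \<Longrightarrow> sd_nxt D (s,PL) = (m,PR) \<Longrightarrow>
   sd_nxt D (s,PR) \<noteq> (m,PL) \<Longrightarrow> sd_nxt D (s,PR) \<noteq> (m,PR) \<Longrightarrow>
   sd_nxt (rule1_res D m s) p = sd_nxt D (s,PR) \<and>
   sd_lab (rule1_res D m s) p = sd_lab D p + sd_lab D (m,PC) + sd_lab D (s,PL) + sd_lab D (m,PC) + sd_lab D (s,PR)"
  by (simp add: rule1_res_def Let_def)

lemma F4: "sd_nxt D p = (m,PR) \<Longrightarrow> sd_nxt D (s,PR) \<noteq> (m,PL) \<Longrightarrow> sd_nxt D (s,PR) \<noteq> (m,PR) \<Longrightarrow>
   sd_nxt (rule1_res D m s) p = sd_nxt D (s,PR) \<and>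
   sd_lab (rule1_res D m s) p = sd_lab D p + sd_lab D (m,PC) + sd_lab D (s,PR)"
  by (simp add: rule1_res_def Let_def)

lemma F5: "sd_nxt D p = (m,PR) \<Longrightarrow> sd_nxt D (s,PR) = (m,PL) \<Longrightarrow>
   sd_nxt D (s,PL) \<noteq> (m,PL) \<Longrightarrow> sd_nxt D (s,PL) \<noteq> (m,PR) \<Longrightarrow>
   sd_nxt (rule1_res D m s) p = sd_nxt D (s,PL) \<and>
   sd_lab (rule1_res D m s) p = sd_lab D p + sd_lab D (m,PC) + sd_lab D (s,PR) + sd_lab D (m,PC) + sd_lab D (s,PL)"
  by (simp add: rule1_res_def Let_def)

lemma r1_verts: "sd_verts (rule1_res D m s) = sd_verts D - {m, s}"
  by (simp add: rule1_res_def Let_def)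

lemma r1_loops: "sd_loops (rule1_res D m s) = sd_loops D +
   ((if sd_nxt D (s,PL) = (m,PL) then {#sd_lab D (s,PL) + sd_lab D (m,PC)#} else {#})
  + (if sd_nxt D (s,PR) = (m,PR) then {#sd_lab D (s,PR) + sd_lab D (m,PC)#} else {#})
  + (if sd_nxt D (s,PL) = (m,PR) \<and> sd_nxt D (s,PR) = (m,PL)
     then {#sd_lab D (s,PL) + sd_lab D (s,PR) + 2 * sd_lab D (m,PC)#} else {#}))"
  by (simp add: rule1_res_def Let_def)

definition EE :: "sd \<Rightarrow> vx rel" where "EE D = adjrel D \<union> (adjrel D)\<inverse>"

lemma comprel_EE: "comprel D = {(v, w). v \<in> sd_verts D \<and> w \<in> sd_verts D \<and> (v, w) \<in> (EE D)\<^sup>*}"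
  by (simp add: comprel_def EE_def)

lemma EE_sub: "WF D \<Longrightarrow> EE D \<subseteq> sd_verts D \<times> sd_verts D"
proof -
  assume w: "WF D"
  then have img: "sd_nxt D ` outports D = inports D" by (simp add: WF_def bij_betw_def)
  have "adjrel D \<subseteq> sd_verts D \<times> sd_verts D"
  proof
    fix x assume "x \<in> adjrel D"
    then obtain v u p where x: "x = (v,u)" "(v,p) \<in> outports D" "fst (sd_nxt D (v,p)) = u"
      by (auto simp: adjrel_def)
    then have "sd_nxt D (v,p) \<in> inports D" using img by auto
    then have "u \<in> sd_verts D" using x by (auto simp: inports_def)
    moreover have "v \<in> sd_verts D" using x by (auto simp: outports_def)
    ultimately show "x \<in> sd_verts D \<times> sd_verts D" using x by simp
  qed
  then show ?thesis by (auto simp: EE_def)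
qed

lemma EE_star_verts: "WF D \<Longrightarrow> (x, z) \<in> (EE D)\<^sup>* \<Longrightarrow> x \<in> sd_verts D \<Longrightarrow> z \<in> sd_verts D"
proof -
  assume w: "WF D" and r: "(x, z) \<in> (EE D)\<^sup>*" and x: "x \<in> sd_verts D"
  from r show ?thesis
    by (induction rule: rtrancl_induct) (use x EE_sub[OF w] in auto)
qed

lemma EE_sym: "(x, z) \<in> (EE D)\<^sup>* \<Longrightarrow> (z, x) \<in> (EE D)\<^sup>*"
proof -
  have "sym (EE D)" by (auto simp: EE_def sym_def)
  then have "sym ((EE D)\<^sup>*)" by (rule sym_rtrancl)
  then show "(x, z) \<in> (EE D)\<^sup>* \<Longrightarrow> (z, x) \<in> (EE D)\<^sup>*" by (auto dest: symD)
qed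

lemma comprel_equiv: "equiv (sd_verts D) (comprel D)"
proof (rule equivI)
  show "refl_on (sd_verts D) (comprel D)"
    unfolding refl_on_def comprel_EE by auto
  show "comprel D \<subseteq> sd_verts D \<times> sd_verts D" by (auto simp: comprel_EE)
  show "sym (comprel D)"
    by (rule symI) (auto simp: comprel_EE intro: EE_sym)
  show "trans (comprel D)"
    by (rule transI) (auto simp: comprel_EE intro: rtrancl_trans)
qed

lemma card_quot_le:
  assumes eq: "equiv A R" and fT: "finite T" and cov: "\<forall>x\<in>A. \<exists>t\<in>T. (x, t) \<in> R"
  shows "card (A // R) \<le> card T"
proof -
  have "A // R \<subseteq> (\<lambda>t. R `` {t}) ` T"
  proof
    fix X assume "X \<in> A // R"
    then obtain x where X: "X = R `` {x}" "x \<in> A" by (auto elim: quotientE)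
    then obtain t where t: "t \<in> T" "(x, t) \<in> R" using cov by auto
    then have "R `` {x} = R `` {t}" using equiv_class_eq[OF eq] by blast
    then show "X \<in> (\<lambda>t. R `` {t}) ` T" using X t by auto
  qed
  then have "card (A // R) \<le> card ((\<lambda>t. R `` {t}) ` T)" using fT by (simp add: card_mono)
  also have "\<dots> \<le> card T" using fT by (rule card_image_le)
  finally show ?thesis .
qed

locale stp =
  fixes D :: sd and m s :: vx
  assumes wf: "WF D" and mv: "m \<in> sd_verts D" and fm: "fst m" and sv: "s \<in> sd_verts D"
    and fs: "\<not> fst s" and e: "sd_nxt D (m, PC) = (s, PC)"
begin

abbreviation "N \<equiv> sd_nxt D"
abbreviation "L \<equiv> sd_lab D"
abbreviation "OP \<equiv> outports D"
abbreviation "IP \<equiv> inports D"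
abbreviation "D' \<equiv> rule1_res D m s"
abbreviation "N' \<equiv> sd_nxt D'"
abbreviation "L' \<equiv> sd_lab D'"
abbreviation "a \<equiv> N (s,PL)"
abbreviation "b \<equiv> N (s,PR)"
abbreviation "y \<equiv> L (m,PC)"
abbreviation "l1 \<equiv> L (s,PL)"
abbreviation "l2 \<equiv> L (s,PR)"
definition "p1 = inv_into OP N (m,PL)"
definition "p2 = inv_into OP N (m,PR)"

lemma fin: "finite (sd_verts D)" using wf by (simp add: WF_def)
lemma inj: "inj_on N OP" using wf by (simp add: WF_def bij_betw_def)
lemma img: "N ` OP = IP" using wf by (simp add: WF_def bij_betw_def)
lemma ms: "m \<noteq> s" using fm fs by auto

lemma inO: "(v,p) \<in> OP \<longleftrightarrow> v \<in> sd_verts D \<and> (if fst v then p = PC else p \<noteq> PC)"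
  by (simp add: outports_def)
lemma inI: "(v,p) \<in> IP \<longleftrightarrow> v \<in> sd_verts D \<and> (if fst v then p \<noteq> PC else p = PC)"
  by (simp add: inports_def)

lemma mem: "(m,PC) \<in> OP" "(s,PL) \<in> OP" "(s,PR) \<in> OP" "(m,PL) \<in> IP" "(m,PR) \<in> IP" "(s,PC) \<in> IP"
  using mv sv fm fs by (auto simp: inO inI)

lemma injD: "x \<in> OP \<Longrightarrow> z \<in> OP \<Longrightarrow> N x = N z \<Longrightarrow> x = z"
  using inj by (auto dest: inj_onD)

lemma NI: "x \<in> OP \<Longrightarrow> N x \<in> IP" using img by auto

lemma p1: "p1 \<in> OP" "N p1 = (m,PL)"
  using mem img unfolding p1_def by (auto intro: inv_into_into f_inv_into_f)
lemma p2: "p2 \<in> OP" "N p2 = (m,PR)"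
  using mem img unfolding p2_def by (auto intro: inv_into_into f_inv_into_f)

lemma ab: "a \<in> IP" "b \<in> IP" "a \<noteq> b" "a \<noteq> (s,PC)" "b \<noteq> (s,PC)"
  using NI mem injD[of "(s,PL)" "(s,PR)"] injD[of "(s,PL)" "(m,PC)"] injD[of "(s,PR)" "(m,PC)"] e ms
  by auto

lemma p12: "p1 = (s,PL) \<longleftrightarrow> a = (m,PL)" "p1 = (s,PR) \<longleftrightarrow> b = (m,PL)"
  "p2 = (s,PL) \<longleftrightarrow> a = (m,PR)" "p2 = (s,PR) \<longleftrightarrow> b = (m,PR)"
  "p1 \<noteq> (m,PC)" "p2 \<noteq> (m,PC)" "p1 \<noteq> p2"
  using p1 p2 mem injD e by (metis Pair_inject port.distinct)+

lemma OP': "outports D' = OP - {(m,PC),(s,PL),(s,PR)}"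
  using fm fs by (auto simp: outports_def r1_verts) (metis port.exhaust)+
lemma IP': "inports D' = IP - {(m,PL),(m,PR),(s,PC)}"
  using fm fs by (auto simp: inports_def r1_verts) (metis port.exhaust)+

lemma N'L': assumes "p \<in> outports D'"
  shows "N' p = (if p = p1 then (if a = (m,PR) then b else a)
                 else if p = p2 then (if b = (m,PL) then a else b) else N p)
       \<and> L' p = (if p = p1 then (if a = (m,PR) then L p + y + l1 + y + l2 else L p + y + l1)
                 else if p = p2 then (if b = (m,PL) then L p + y + l2 + y + l1 else L p + y + l2)
                 else L p)"
proof -
  have pO: "p \<in> OP" "p \<noteq> (m,PC)" "p \<noteq> (s,PL)" "p \<noteq> (s,PR)" using assms OP' by auto
  show ?thesis
  proof (cases "p = p1")
    case True
    then have np: "N p = (m,PL)" using p1 by simp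
    have "a \<noteq> (m,PL)" "b \<noteq> (m,PL)" using p12 True pO by auto
    then show ?thesis using True np F2[of D p m s, OF np] F3[of D p m s, OF np] ab p12 by auto
  next
    case False
    note F = False
    show ?thesis
    proof (cases "p = p2")
      case True
      then have np: "N p = (m,PR)" using p2 by simp
      have "a \<noteq> (m,PR)" "b \<noteq> (m,PR)" using p12 True pO by auto
      then show ?thesis using True F np F4[of D p m s, OF np] F5[of D p m s, OF np] ab p12 by auto
    next
      case False
      have "N p \<noteq> (m,PL)" using injD[of p p1] p1 pO F by auto
      moreover have "N p \<noteq> (m,PR)" using injD[of p p2] p2 pO False by auto
      ultimately show ?thesis using F1[of D p m s] F False by auto
    qed
  qed
qed

lemma p1O': "p1 \<in> outports D' \<longleftrightarrow> a \<noteq> (m,PL) \<and> b \<noteq> (m,PL)"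
  using OP' p1 p12 by auto
lemma p2O': "p2 \<in> outports D' \<longleftrightarrow> a \<noteq> (m,PR) \<and> b \<noteq> (m,PR)"
  using OP' p2 p12 by auto

lemma finO: "finite OP"
proof -
  have "OP \<subseteq> sd_verts D \<times> {PL,PR,PC}" by (auto simp: outports_def) (metis port.exhaust)
  then show ?thesis using fin finite_subset by blast
qed

lemma cardOI: "card OP = card IP"
  using inj img finO by (metis card_image)

lemma N'_cases: assumes pO: "p \<in> outports D'"
  shows "(p = p1 \<and> a \<noteq> (m,PR) \<and> N' p = a) \<or> (p = p1 \<and> a = (m,PR) \<and> N' p = b)
       \<or> (p = p2 \<and> b \<noteq> (m,PL) \<and> N' p = b) \<or> (p = p2 \<and> b = (m,PL) \<and> N' p = a)
       \<or> (p \<noteq> p1 \<and> p \<noteq> p2 \<and> N' p = N p)"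
  using N'L'[OF pO] p12 by auto

lemma inIP': "x \<in> IP \<Longrightarrow> x \<noteq> (m,PL) \<Longrightarrow> x \<noteq> (m,PR) \<Longrightarrow> x \<noteq> (s,PC) \<Longrightarrow> x \<in> inports D'"
  unfolding IP' by blast

lemma N'_into: assumes pO: "p \<in> outports D'" shows "N' p \<in> inports D'"
proof -
  have pp: "p \<in> OP" "p \<noteq> (m,PC)" using pO OP' by auto
  have o1: "p = p1 \<Longrightarrow> a \<noteq> (m,PL) \<and> b \<noteq> (m,PL)" using p1O' pO by blast
  have o2: "p = p2 \<Longrightarrow> a \<noteq> (m,PR) \<and> b \<noteq> (m,PR)" using p2O' pO by blast
  have g: "p \<noteq> p1 \<Longrightarrow> p \<noteq> p2 \<Longrightarrow> N p \<noteq> (m,PL) \<and> N p \<noteq> (m,PR) \<and> N p \<noteq> (s,PC)"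
    using injD[of p p1] p1 injD[of p p2] p2 injD[of p "(m,PC)"] pp mem e by auto
  from N'_cases[OF pO] show ?thesis
  proof (elim disjE conjE)
    assume "p = p1" "a \<noteq> (m,PR)" "N' p = a"
    then show ?thesis using o1 ab inIP' by metis
  next
    assume "p = p1" "a = (m,PR)" "N' p = b"
    then show ?thesis using o1 ab inIP' by metis
  next
    assume "p = p2" "b \<noteq> (m,PL)" "N' p = b"
    then show ?thesis using o2 ab inIP' by metis
  next
    assume "p = p2" "b = (m,PL)" "N' p = a"
    then show ?thesis using o2 ab inIP' by metis
  next
    assume "p \<noteq> p1" "p \<noteq> p2" "N' p = N p"
    then show ?thesis using g NI[OF pp(1)] inIP' by metis
  qed
qed

lemma N'_inj: "inj_on N' (outports D')"
proof (rule inj_onI)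
  fix p q assume pO: "p \<in> outports D'" and qO: "q \<in> outports D'" and eq: "N' p = N' q"
  have pp: "p \<in> OP" "p \<noteq> (m,PC)" "p \<noteq> (s,PL)" "p \<noteq> (s,PR)" using pO OP' by auto
  have qq: "q \<in> OP" "q \<noteq> (m,PC)" "q \<noteq> (s,PL)" "q \<noteq> (s,PR)" using qO OP' by auto
  have i1: "N p \<noteq> a" "N p \<noteq> b" "N q \<noteq> a" "N q \<noteq> b"
    using injD[OF pp(1) mem(2)] injD[OF pp(1) mem(3)] injD[OF qq(1) mem(2)] injD[OF qq(1) mem(3)]
      pp qq by auto
  have i2: "N p = N q \<Longrightarrow> p = q" using injD[OF pp(1) qq(1)] .
  have o1: "p1 \<in> outports D' \<Longrightarrow> a \<noteq> (m,PL) \<and> b \<noteq> (m,PL)" using p1O' by blast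
  have o2: "p2 \<in> outports D' \<Longrightarrow> a \<noteq> (m,PR) \<and> b \<noteq> (m,PR)" using p2O' by blast
  have ne: "a \<noteq> b" using ab by simp
  show "p = q"
    using N'_cases[OF pO] N'_cases[OF qO]
    apply -
    apply (elim disjE conjE)
    using eq i1 i2 ne o1 o2 pO qO by simp_all
qed

lemma WF': "WF D'"
proof -
  have f: "finite (sd_verts D')" using fin by (simp add: r1_verts)
  have c: "card (outports D') = card (inports D')"
  proof -
    have "card (outports D') = card OP - 3"
      unfolding OP' using mem finO ms by (simp add: card_Diff_subset)
    moreover have "card (inports D') = card IP - 3"
      unfolding IP' using mem finO img ms by (simp add: card_Diff_subset)
    ultimately show ?thesis using cardOI by simp
  qed
  have fI: "finite (inports D')" using finO img IP' by (metis finite_Diff finite_imageI)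
  have sub: "N' ` outports D' \<subseteq> inports D'" using N'_into by auto
  have "card (N' ` outports D') = card (inports D')" using card_image[OF N'_inj] c by simp
  then have "N' ` outports D' = inports D'" using card_subset_eq[OF fI sub] by simp
  then show ?thesis using f N'_inj by (simp add: WF_def bij_betw_def)
qed

lemma finO': "finite (outports D')" using finO OP' by simp

lemma sumL: "sum L OP = sum L (outports D') + y + l1 + l2"
proof -
  have sub: "{(m,PC),(s,PL),(s,PR)} \<subseteq> OP" using mem by auto
  have "sum L OP = sum L (OP - {(m,PC),(s,PL),(s,PR)}) + sum L {(m,PC),(s,PL),(s,PR)}"
    using sum.subset_diff[OF sub finO] .
  also have "sum L {(m,PC),(s,PL),(s,PR)} = y + l1 + l2" using ms by simp
  finally show ?thesis using OP' by simp
qed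

lemma sumL': "sum L' (outports D') = sum L (outports D')
   + (if p1 \<in> outports D' then (if a = (m,PR) then y + l1 + y + l2 else y + l1) else 0)
   + (if p2 \<in> outports D' then (if b = (m,PL) then y + l2 + y + l1 else y + l2) else 0)"
proof -
  define e1 where "e1 = (if a = (m,PR) then y + l1 + y + l2 else y + l1)"
  define e2 where "e2 = (if b = (m,PL) then y + l2 + y + l1 else y + l2)"
  have "sum L' (outports D') = sum (\<lambda>p. L p + (if p = p1 then e1 else 0) + (if p = p2 then e2 else 0)) (outports D')"
  proof (rule sum.cong)
    fix p assume "p \<in> outports D'"
    then show "L' p = L p + (if p = p1 then e1 else 0) + (if p = p2 then e2 else 0)"
      using N'L' p12(7) unfolding e1_def e2_def by auto
  qed simp
  also have "\<dots> = sum L (outports D') + (if p1 \<in> outports D' then e1 else 0) + (if p2 \<in> outports D' then e2 else 0)"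
    using finO' by (simp add: sum.distrib sum.delta')
  finally show ?thesis unfolding e1_def e2_def .
qed

lemma labsum: "label_sum D' \<le> label_sum D + y"
proof -
  have ne: "a \<noteq> b" using ab by simp
  have "label_sum D' = sum L' (outports D') + sum_mset (sd_loops D)
     + ((if a = (m,PL) then l1 + y else 0) + (if b = (m,PR) then l2 + y else 0)
       + (if a = (m,PR) \<and> b = (m,PL) then l1 + l2 + 2 * y else 0))"
    by (simp add: label_sum_def r1_loops)
  also have "\<dots> \<le> sum L OP + sum_mset (sd_loops D) + y"
    unfolding sumL' sumL p1O' p2O' using ne by auto
  finally show ?thesis by (simp add: label_sum_def)
qed

lemma y_le: "y \<le> label_sum D"
  using member_le_sum[of "(m,PC)" OP L] finO mem by (simp add: label_sum_def)

definition "Att = {fst p1, fst p2, fst a, fst b} - {m, s}"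
definition "Att0 = fst ` ({p1, p2} \<inter> outports D')"

lemma vD': "sd_verts D' = sd_verts D - {m, s}" by (rule r1_verts)

lemma edge_keep: assumes "(u, w) \<in> EE D" "u \<in> sd_verts D'" "w \<in> sd_verts D'"
  shows "(u, w) \<in> EE D'"
proof -
  have key: "(u', w') \<in> adjrel D'" if adj: "(u', w') \<in> adjrel D" and u'v: "u' \<in> sd_verts D'" and w'v: "w' \<in> sd_verts D'" for u' w'
  proof -
    obtain p where p: "(u',p) \<in> OP" "fst (N (u',p)) = w'" using adj unfolding adjrel_def by blast
    have pO: "(u',p) \<in> outports D'" using p(1) u'v vD' OP' by auto
    have "w' \<noteq> m" using w'v vD' by auto
    then have "(u',p) \<noteq> p1" "(u',p) \<noteq> p2" using p p1 p2 by auto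
    then have "N' (u',p) = N (u',p)" using N'_cases[OF pO] by auto
    then show ?thesis using pO p by (auto simp: adjrel_def)
  qed
  show ?thesis using assms key unfolding EE_def by blast
qed

lemma msE: "(m, s) \<in> EE D"
  using mem e by (auto simp: EE_def adjrel_def)

lemma Att_lem: assumes "u \<in> sd_verts D'" "(u, x) \<in> EE D" "x = m \<or> x = s"
  shows "u \<in> Att"
proof -
  have u: "u \<in> sd_verts D" "u \<noteq> m" "u \<noteq> s" using assms(1) vD' by auto
  show ?thesis
  proof (cases "(u, x) \<in> adjrel D")
    case True
    then obtain q where q: "(u,q) \<in> OP" "fst (N (u,q)) = x" by (auto simp: adjrel_def)
    have NI': "N (u,q) \<in> IP" using NI q by auto
    show ?thesis
    proof (cases "x = m")
      case True
      then have "N (u,q) = (m,PL) \<or> N (u,q) = (m,PR)" using NI' q fm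
        by (cases "N (u,q)") (auto simp: inI, metis port.exhaust)
      then have "(u,q) = p1 \<or> (u,q) = p2" using injD[OF q(1) p1(1)] injD[OF q(1) p2(1)] p1 p2 by auto
      then have "u = fst p1 \<or> u = fst p2" by (metis fst_conv)
      then show ?thesis using u by (auto simp: Att_def)
    next
      case False
      then have "x = s" using assms by auto
      then have "N (u,q) = (s,PC)" using NI' q fs by (cases "N (u,q)") (auto simp: inI)
      then have "(u,q) = (m,PC)" using injD[OF q(1) mem(1)] e by auto
      then show ?thesis using u by auto
    qed
  next
    case False
    then have "(x, u) \<in> adjrel D" using assms(2) by (auto simp: EE_def)
    then obtain q where q: "(x,q) \<in> OP" "fst (N (x,q)) = u" by (auto simp: adjrel_def)
    show ?thesis
    proof (cases "x = m")
      case True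
      then have "q = PC" using q fm by (auto simp: inO)
      then show ?thesis using q True e u by auto
    next
      case False
      then have "x = s" using assms by auto
      then have "q = PL \<or> q = PR" using q fs by (auto simp: inO) (metis port.exhaust)
      then show ?thesis using q \<open>x = s\<close> u by (auto simp: Att_def)
    qed
  qed
qed

lemma P1: assumes "(v, w) \<in> (EE D)\<^sup>*" "v \<in> sd_verts D" "(v, m) \<notin> (EE D)\<^sup>*"
  shows "(v, w) \<in> (EE D')\<^sup>*"
  using assms(1)
proof (induction rule: rtrancl_induct)
  case base then show ?case by simp
next
  case (step u w)
  have notms: "z \<in> sd_verts D'" if "(v, z) \<in> (EE D)\<^sup>*" for z
  proof -
    have "z \<in> sd_verts D" using EE_star_verts[OF wf that assms(2)] .
    moreover have "z \<noteq> m" using that assms(3) by auto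
    moreover have "z \<noteq> s" using that assms(3) msE EE_sym
      by (metis converse_rtrancl_into_rtrancl rtrancl_trans)
    ultimately show ?thesis using vD' by auto
  qed
  have "(u, w) \<in> EE D'"
    using edge_keep[OF step(2)] notms step(1) rtrancl_into_rtrancl[OF step(1) step(2)] by blast
  then show ?case by (rule rtrancl_into_rtrancl[OF step(3)])
qed

lemma P2: assumes "(v, w) \<in> (EE D)\<^sup>*" "v \<in> sd_verts D'"
  shows "(v, w) \<in> (EE D')\<^sup>* \<or> (\<exists>x\<in>Att. (v, x) \<in> (EE D')\<^sup>*)"
  using assms(1)
proof (induction rule: rtrancl_induct)
  case base then show ?case by simp
next
  case (step u w)
  show ?case
  proof (cases "\<exists>x\<in>Att. (v, x) \<in> (EE D')\<^sup>*")
    case True then show ?thesis by simp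
  next
    case False
    then have vu: "(v, u) \<in> (EE D')\<^sup>*" using step(3) by simp
    have uD': "u \<in> sd_verts D'" using EE_star_verts[OF WF' vu assms(2)] .
    have wD: "w \<in> sd_verts D" using EE_sub[OF wf] step(2) by auto
    show ?thesis
    proof (cases "w = m \<or> w = s")
      case True
      then have "u \<in> Att" using Att_lem[OF uD' step(2)] by simp
      then show ?thesis using vu by blast
    next
      case False
      then have "w \<in> sd_verts D'" using wD vD' by auto
      then have "(u, w) \<in> EE D'" using edge_keep[OF step(2) uD'] by simp
      then show ?thesis using rtrancl_into_rtrancl[OF vu] by blast
    qed
  qed
qed

lemma AttC: assumes "x \<in> Att" shows "\<exists>t\<in>Att0. (x, t) \<in> (EE D')\<^sup>*"
proof -
  have adj: "(fst p, fst (N' p)) \<in> EE D'" if "p \<in> outports D'" for p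
    using that by (cases p) (auto simp: EE_def adjrel_def)
  have nm: "z \<noteq> (m,PL) \<and> z \<noteq> (m,PR)" if "z \<in> IP" "fst z \<noteq> m" for z
    using that by auto
  consider "x = fst p1" "x \<noteq> m" "x \<noteq> s" | "x = fst p2" "x \<noteq> m" "x \<noteq> s"
    | "x = fst a" "x \<noteq> m" "x \<noteq> s" | "x = fst b" "x \<noteq> m" "x \<noteq> s"
    using assms unfolding Att_def by blast
  then show ?thesis
  proof cases
    case 1
    then have "p1 \<noteq> (m,PC)" "p1 \<noteq> (s,PL)" "p1 \<noteq> (s,PR)" by auto
    then have "p1 \<in> outports D'" using p1 OP' by simp
    then show ?thesis using 1 by (auto simp: Att0_def)
  next
    case 2
    then have "p2 \<noteq> (m,PC)" "p2 \<noteq> (s,PL)" "p2 \<noteq> (s,PR)" by auto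
    then have "p2 \<in> outports D'" using p2 OP' by simp
    then show ?thesis using 2 by (auto simp: Att0_def)
  next
    case 3
    then have an: "a \<noteq> (m,PL)" "a \<noteq> (m,PR)" by auto
    show ?thesis
    proof (cases "p1 \<in> outports D'")
      case True
      then have "N' p1 = a" using N'_cases[OF True] an p12(7) by auto
      then have "(fst p1, x) \<in> EE D'" using adj[OF True] 3 by simp
      then have "(x, fst p1) \<in> (EE D')\<^sup>*" using EE_sym by blast
      then show ?thesis using True by (auto simp: Att0_def)
    next
      case False
      then have bm: "b = (m,PL)" using p1O' an by auto
      then have T2: "p2 \<in> outports D'" using p2O' an by auto
      then have "N' p2 = a" using N'_cases[OF T2] an bm p12(7) by auto
      then have "(fst p2, x) \<in> EE D'" using adj[OF T2] 3 by simp
      then have "(x, fst p2) \<in> (EE D')\<^sup>*" using EE_sym by blast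
      then show ?thesis using T2 by (auto simp: Att0_def)
    qed
  next
    case 4
    then have bn: "b \<noteq> (m,PL)" "b \<noteq> (m,PR)" by auto
    show ?thesis
    proof (cases "p2 \<in> outports D'")
      case True
      then have "N' p2 = b" using N'_cases[OF True] bn p12(7) by auto
      then have "(fst p2, x) \<in> EE D'" using adj[OF True] 4 by simp
      then have "(x, fst p2) \<in> (EE D')\<^sup>*" using EE_sym by blast
      then show ?thesis using True by (auto simp: Att0_def)
    next
      case False
      then have am: "a = (m,PR)" using p2O' bn by auto
      then have T1: "p1 \<in> outports D'" using p1O' bn by auto
      then have "N' p1 = b" using N'_cases[OF T1] bn am p12(7) by auto
      then have "(fst p1, x) \<in> EE D'" using adj[OF T1] 4 by simp
      then have "(x, fst p1) \<in> (EE D')\<^sup>*" using EE_sym by blast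
      then show ?thesis using T1 by (auto simp: Att0_def)
    qed
  qed
qed

lemma Att0_card: "card Att0 + size (sd_loops D') \<le> 2 + size (sd_loops D)"
proof -
  have "card Att0 \<le> card ({p1, p2} \<inter> outports D')" unfolding Att0_def by (rule card_image_le) simp
  moreover have "card ({p1, p2} \<inter> outports D') =
      (if p1 \<in> outports D' then 1 else 0) + (if p2 \<in> outports D' then 1 else 0)"
    using p12(7) by auto
  ultimately have h: "card Att0 \<le> (if a \<noteq> (m,PL) \<and> b \<noteq> (m,PL) then 1 else 0)
      + (if a \<noteq> (m,PR) \<and> b \<noteq> (m,PR) then 1 else 0)"
    unfolding p1O' p2O' by simp
  show ?thesis using h ab(3) by (simp add: r1_loops) (auto split: if_splits)
qed

lemma outp_v: "p \<in> outports X \<Longrightarrow> fst p \<in> sd_verts X"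
  by (cases p) (auto simp: outports_def)

lemma Att0_sub: "Att0 \<subseteq> sd_verts D'"
  unfolding Att0_def using outp_v by blast

lemma comp: "num_components D' \<le> num_components D + 1"
proof -
  define Q where "Q = sd_verts D // comprel D"
  define rep where "rep = (\<lambda>X::vx set. SOME x. x \<in> X)"
  define K where "K = comprel D `` {m}"
  define T where "T = (rep ` Q - {rep K}) \<union> Att0"
  have eqv: "equiv (sd_verts D) (comprel D)" by (rule comprel_equiv)
  have fQ: "finite Q" unfolding Q_def using fin by (rule finite_quotient) (auto simp: comprel_EE)
  have repin: "rep X \<in> X" if XQ: "X \<in> Q" for X
  proof -
    obtain x where "X = comprel D `` {x}" "x \<in> sd_verts D" using XQ unfolding Q_def by (auto elim: quotientE)
    then have "x \<in> X" using equiv_class_self[OF eqv] by simp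
    then show ?thesis unfolding rep_def by (rule someI)
  qed
  have KQ: "K \<in> Q" unfolding K_def Q_def using mv by (rule quotientI)
  have fAtt0: "finite Att0" unfolding Att0_def by simp
  have fT: "finite T" unfolding T_def using fQ fAtt0 by simp
  have cT: "card T \<le> card Q - 1 + card Att0"
  proof -
    have "card T \<le> card (rep ` Q - {rep K}) + card Att0" unfolding T_def by (rule card_Un_le)
    moreover have "card (rep ` Q - {rep K}) = card (rep ` Q) - 1" using KQ fQ by simp
    moreover have "card (rep ` Q) \<le> card Q" using fQ by (rule card_image_le)
    ultimately show ?thesis by linarith
  qed
  have cQ: "card Q \<ge> 1" using KQ fQ by (metis One_nat_def Suc_leI card_gt_0_iff empty_iff)
  have cov: "\<forall>v\<in>sd_verts D'. \<exists>t\<in>T. (v, t) \<in> comprel D'"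
  proof
    fix v assume vD: "v \<in> sd_verts D'"
    then have vD0: "v \<in> sd_verts D" using vD' by auto
    show "\<exists>t\<in>T. (v, t) \<in> comprel D'"
    proof (cases "(v, m) \<in> (EE D)\<^sup>*")
      case True
      have "(v, m) \<notin> (EE D')\<^sup>*"
      proof
        assume "(v, m) \<in> (EE D')\<^sup>*"
        then have "m \<in> sd_verts D'" using EE_star_verts[OF WF' _ vD] by blast
        then show False using vD' by auto
      qed
      then obtain x where x: "x \<in> Att" "(v, x) \<in> (EE D')\<^sup>*" using P2[OF True vD] by auto
      obtain t where t: "t \<in> Att0" "(x, t) \<in> (EE D')\<^sup>*" using AttC[OF x(1)] by auto
      have "(v, t) \<in> (EE D')\<^sup>*" using x(2) t(2) by (rule rtrancl_trans)
      then have "(v, t) \<in> comprel D'" using vD Att0_sub t(1) by (auto simp: comprel_EE)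
      then show ?thesis using t(1) unfolding T_def by blast
    next
      case False
      define X where "X = comprel D `` {v}"
      have XQ: "X \<in> Q" unfolding X_def Q_def using vD0 by (rule quotientI)
      have r: "rep X \<in> X" by (rule repin[OF XQ])
      then have vr: "(v, rep X) \<in> (EE D)\<^sup>*" "rep X \<in> sd_verts D" unfolding X_def by (auto simp: comprel_EE)
      have "rep X \<noteq> m" using vr False by auto
      moreover have "rep X \<noteq> s"
      proof
        assume "rep X = s"
        then have "(v, s) \<in> (EE D)\<^sup>*" using vr by simp
        then have "(v, m) \<in> (EE D)\<^sup>*" using msE EE_sym
          by (meson converse_rtrancl_into_rtrancl r_into_rtrancl rtrancl_trans)
        then show False using False by simp
      qed
      ultimately have rD': "rep X \<in> sd_verts D'" using vr vD' by auto
      have "(v, rep X) \<in> (EE D')\<^sup>*" using P1[OF vr(1) vD0 False] .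
      then have c1: "(v, rep X) \<in> comprel D'" using vD rD' by (auto simp: comprel_EE)
      have "rep X \<noteq> rep K"
      proof
        assume eq: "rep X = rep K"
        have "rep K \<in> K" by (rule repin[OF KQ])
        then have "(m, rep K) \<in> (EE D)\<^sup>*" unfolding K_def by (auto simp: comprel_EE)
        then have "(rep K, m) \<in> (EE D)\<^sup>*" by (rule EE_sym)
        then have "(v, m) \<in> (EE D)\<^sup>*" using vr(1) eq by (metis rtrancl_trans)
        then show False using False by simp
      qed
      then have "rep X \<in> T" unfolding T_def using XQ by blast
      then show ?thesis using c1 by blast
    qed
  qed
  have "card (sd_verts D' // comprel D') \<le> card T"
    by (rule card_quot_le[OF comprel_equiv fT cov])
  then have "card (sd_verts D' // comprel D') \<le> card Q - 1 + card Att0" using cT by simp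
  then show ?thesis using Att0_card cQ unfolding num_components_def Q_def by linarith
qed

end


locale d0 =
  fixes Tm Tp :: btree and \<sigma> :: "nat \<Rightarrow> nat" and n :: nat
  assumes n2: "n \<ge> 2" and lm: "nleaves Tm = n" and lp: "nleaves Tp = n"
    and bij: "bij_betw \<sigma> {1..n} {1..n}"
begin

abbreviation "G \<equiv> D0 Tm Tp \<sigma>"
abbreviation "N0 \<equiv> sd_nxt G"

lemma TmL: "Tm \<noteq> Leaf" using n2 lm by (auto simp: nleaves_def)
lemma TpL: "Tp \<noteq> Leaf" using n2 lp by (auto simp: nleaves_def)
lemma lenm: "length (leaves Tm) = n" using lm by (simp add: nleaves_def)
lemma lenp: "length (leaves Tp) = n" using lp by (simp add: nleaves_def)
lemma cardm: "card (inodes Tm) = n - 1" using lenm len_leaves[of Tm] by simp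
lemma cardp: "card (inodes Tp) = n - 1" using lenp len_leaves[of Tp] by simp

lemma verts: "sd_verts G = Pair False ` inodes Tm \<union> Pair True ` inodes Tp"
  by (simp add: D0_def)

lemma N0s: "N0 ((False,a),PL) = childtgt Tm Tp \<sigma> (a @ [False])"
  "N0 ((False,a),PR) = childtgt Tm Tp \<sigma> (a @ [True])"
  "N0 ((True,b),PC) = (if b = [] then ((False,[]),PC) else mergein b)"
  by (simp_all add: D0_def)

lemma port_ne: "(p \<noteq> PC) = (p = PL \<or> p = PR)" by (cases p) auto

lemma O0: "outports G = (\<lambda>a. ((False,a),PL)) ` inodes Tm \<union> (\<lambda>a. ((False,a),PR)) ` inodes Tm
    \<union> (\<lambda>b. ((True,b),PC)) ` inodes Tp"
  by (auto simp: outports_def verts port_ne)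

lemma I0: "inports G = (\<lambda>a. ((False,a),PC)) ` inodes Tm \<union> (\<lambda>b. ((True,b),PL)) ` inodes Tp
    \<union> (\<lambda>b. ((True,b),PR)) ` inodes Tp"
  by (auto simp: inports_def verts port_ne)

lemma card_verts: "card (sd_verts G) = 2 * (n - 1)"
proof -
  have "card (sd_verts G) = card (Pair False ` inodes Tm) + card (Pair True ` inodes Tp)"
    unfolding verts by (rule card_Un_disjoint) (auto simp: inodes_finite)
  also have "\<dots> = card (inodes Tm) + card (inodes Tp)" by (simp add: card_image inj_on_def)
  finally show ?thesis using cardm cardp by simp
qed

lemma card3: "card (f1 ` A \<union> f2 ` A \<union> f3 ` B) = card A + card A + card B"
  if "inj f1" "inj f2" "inj f3" "finite A" "finite B" "range f1 \<inter> range f2 = {}"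
     "range f1 \<inter> range f3 = {}" "range f2 \<inter> range f3 = {}"
  for f1 f2 f3 :: "bool list \<Rightarrow> vx \<times> port" and A B
proof -
  have d: "(f1 ` A \<union> f2 ` A) \<inter> f3 ` B = {}" using that(7,8) by blast
  have "card (f1 ` A \<union> f2 ` A \<union> f3 ` B) = card (f1 ` A \<union> f2 ` A) + card (f3 ` B)"
    by (rule card_Un_disjoint) (use that d in auto)
  also have "card (f1 ` A \<union> f2 ` A) = card (f1 ` A) + card (f2 ` A)"
    by (rule card_Un_disjoint) (use that in auto)
  finally show ?thesis using that by (simp add: card_image inj_on_subset[of _ UNIV])
qed

lemma cardO0: "card (outports G) = 3 * (n - 1)"
  unfolding O0 by (subst card3) (auto simp: inj_def inodes_finite cardm cardp)

lemma cardI0: "card (inports G) = 3 * (n - 1)"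
proof -
  have e: "inports G = (\<lambda>b. ((True,b),PL)) ` inodes Tp \<union> (\<lambda>b. ((True,b),PR)) ` inodes Tp
    \<union> (\<lambda>a. ((False,a),PC)) ` inodes Tm" unfolding I0 by blast
  have "card (inports G) = card (inodes Tp) + card (inodes Tp) + card (inodes Tm)"
    unfolding e by (subst card3) (auto simp: inj_def inodes_finite)
  then show ?thesis using cardm cardp by simp
qed

lemma leaf_idx: assumes "u \<in> set (leaves Tm)"
  shows "leafidx (leaves Tm) u < n \<and> leaves Tm ! leafidx (leaves Tm) u = u"
proof -
  obtain k where k: "k < length (leaves Tm)" "leaves Tm ! k = u" using assms by (auto simp: in_set_conv_nth)
  then have "leafidx (leaves Tm) u = k" using leafidx_nth[OF distinct_leaves k(1)] by simp
  then show ?thesis using k lenm by simp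
qed

lemma mergein_I: "c \<in> inodes Tp \<or> c \<in> set (leaves Tp) \<Longrightarrow> c \<noteq> [] \<Longrightarrow> mergein c \<in> inports G"
  using parent_in[of c Tp] by (auto simp: mergein_def inports_def verts)

lemma child_into: assumes "a \<in> inodes Tm" shows "childtgt Tm Tp \<sigma> (a @ [x]) \<in> inports G"
proof (cases "a @ [x] \<in> inodes Tm")
  case True then show ?thesis by (simp add: childtgt_def inports_def verts)
next
  case False
  then have u: "a @ [x] \<in> set (leaves Tm)" using child_in[OF assms] by auto
  define i where "i = leafidx (leaves Tm) (a @ [x])"
  have i: "i < n" using leaf_idx[OF u] i_def by simp
  have "\<sigma> (i + 1) \<in> {1..n}" using bij i by (auto simp: bij_betw_def)
  then have j: "\<sigma> (i + 1) - 1 < length (leaves Tp)" using lenp by auto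
  define l where "l = leaves Tp ! (\<sigma> (i + 1) - 1)"
  have l: "l \<in> set (leaves Tp)" using j l_def by simp
  then have "l \<noteq> []" using leaf_nonempty[OF TpL] by simp
  then have "mergein l \<in> inports G" using mergein_I l by simp
  then show ?thesis using False by (simp add: childtgt_def i_def l_def)
qed

lemma into: "N0 ` outports G \<subseteq> inports G"
proof -
  have "N0 ((True,b),PC) \<in> inports G" if "b \<in> inodes Tp" for b
  proof (cases "b = []")
    case True then show ?thesis using nonleaf_root[OF TmL] by (simp add: N0s inports_def verts)
  next
    case False then show ?thesis using that mergein_I by (simp add: N0s)
  qed
  then show ?thesis unfolding O0 using child_into by (auto simp: N0s)
qed

lemma surj: "inports G \<subseteq> N0 ` outports G"
proof
  fix t assume "t \<in> inports G"
  then consider c where "t = ((False,c),PC)" "c \<in> inodes Tm"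
    | b q where "t = ((True,b),q)" "b \<in> inodes Tp" "q = PL \<or> q = PR"
    unfolding I0 by blast
  then show "t \<in> N0 ` outports G"
  proof cases
    case (1 c)
    show ?thesis
    proof (cases "c = []")
      case True
      have "N0 ((True,[]),PC) = t" using 1 True by (simp add: N0s)
      moreover have "((True,[]),PC) \<in> outports G" using nonleaf_root[OF TpL] by (simp add: O0)
      ultimately show ?thesis by force
    next
      case False
      have bl: "butlast c \<in> inodes Tm" using parent_in[of c Tm] 1 False by simp
      have c: "c = butlast c @ [last c]" using False by simp
      define pt where "pt = (if last c then PR else PL)"
      have "N0 ((False, butlast c), pt) = childtgt Tm Tp \<sigma> (butlast c @ [last c])"
        unfolding pt_def by (cases "last c") (simp_all add: N0s)
      then have "N0 ((False, butlast c), pt) = childtgt Tm Tp \<sigma> c" using c by simp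
      also have "\<dots> = t" using 1 by (simp add: childtgt_def)
      finally have "N0 ((False, butlast c), pt) = t" .
      moreover have "((False, butlast c), pt) \<in> outports G" using bl unfolding pt_def by (simp add: O0)
      ultimately show ?thesis by force
    qed
  next
    case (2 b q)
    define x where "x = (q = PR)"
    have qx: "q = (if x then PR else PL)" using 2 x_def by auto
    show ?thesis
    proof (cases "b @ [x] \<in> inodes Tp")
      case True
      have "N0 ((True, b @ [x]), PC) = t" using 2 qx by (simp add: N0s mergein_def)
      moreover have "((True, b @ [x]), PC) \<in> outports G" using True by (simp add: O0)
      ultimately show ?thesis by force
    next
      case False
      then have c: "b @ [x] \<in> set (leaves Tp)" using child_in[OF 2(2)] by auto
      then obtain j where j: "j < n" "leaves Tp ! j = b @ [x]" using lenp by (auto simp: in_set_conv_nth)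
      then have "j + 1 \<in> {1..n}" by simp
      then have "j + 1 \<in> \<sigma> ` {1..n}" using bij by (simp add: bij_betw_def)
      then obtain k where k: "k \<in> {1..n}" "\<sigma> k = j + 1" by (metis imageE)
      define i where "i = k - 1"
      have i: "i < n" "i + 1 = k" using k i_def by auto
      define u where "u = leaves Tm ! i"
      have u: "u \<in> set (leaves Tm)" using i lenm u_def by simp
      have un: "u \<noteq> []" using leaf_nonempty[OF TmL u] .
      have ui: "u \<notin> inodes Tm" using leaves_inodes_disj[OF u] .
      have li: "leafidx (leaves Tm) u = i" using leafidx_nth[OF distinct_leaves] i lenm u_def by simp
      have bl: "butlast u \<in> inodes Tm" using parent_in[of u Tm] u un by simp
      have uu: "u = butlast u @ [last u]" using un by simp
      define pt where "pt = (if last u then PR else PL)"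
      have "N0 ((False, butlast u), pt) = childtgt Tm Tp \<sigma> (butlast u @ [last u])"
        unfolding pt_def by (cases "last u") (simp_all add: N0s)
      then have "N0 ((False, butlast u), pt) = childtgt Tm Tp \<sigma> u" using uu by simp
      also have "\<dots> = mergein (b @ [x])" using ui li i k j by (simp add: childtgt_def)
      also have "\<dots> = t" using 2 qx by (simp add: mergein_def)
      finally have "N0 ((False, butlast u), pt) = t" .
      moreover have "((False, butlast u), pt) \<in> outports G" using bl unfolding pt_def by (simp add: O0)
      ultimately show ?thesis by force
    qed
  qed
qed

lemma finO0: "finite (outports G)" unfolding O0 by (simp add: inodes_finite)

lemma WF0: "WF G"
proof -
  have fin: "finite (sd_verts G)" by (simp add: verts inodes_finite)
  have fO: "finite (outports G)" unfolding O0 by (simp add: inodes_finite)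
  have im: "N0 ` outports G = inports G" using into surj by blast
  have "card (N0 ` outports G) = card (outports G)" using im cardO0 cardI0 by simp
  then have "inj_on N0 (outports G)" by (rule eq_card_imp_inj_on[OF fO])
  then show ?thesis using fin im by (simp add: WF_def bij_betw_def)
qed

lemma lab0: "label_sum G = 1"
proof -
  have "((True,[]),PC) \<in> outports G" using nonleaf_root[OF TpL] by (simp add: O0)
  moreover have "sd_lab G = (\<lambda>q. if q = ((True, []), PC) then 1 else 0)" by (simp add: D0_def)
  moreover have "sd_loops G = {#}" using TmL by (simp add: D0_def)
  ultimately show ?thesis using TmL unfolding label_sum_def by (simp add: sum.delta[OF finO0])
qed

lemma adjI: "(v, p) \<in> outports D \<Longrightarrow> fst (sd_nxt D (v, p)) = w \<Longrightarrow> (v, w) \<in> EE D"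
  by (auto simp: EE_def adjrel_def)

lemma conn_split: "a \<in> inodes Tm \<Longrightarrow> ((False, []), (False, a)) \<in> (EE G)\<^sup>*"
proof (induction a rule: rev_induct)
  case Nil then show ?case by simp
next
  case (snoc x a')
  have a': "a' \<in> inodes Tm" using parent_in[of "a' @ [x]" Tm] snoc.prems by simp
  define pt where "pt = (if x then PR else PL)"
  have "N0 ((False, a'), pt) = childtgt Tm Tp \<sigma> (a' @ [x])"
    unfolding pt_def by (cases x) (simp_all add: N0s)
  also have "\<dots> = ((False, a' @ [x]), PC)" using snoc.prems by (simp add: childtgt_def)
  finally have "((False, a'), (False, a' @ [x])) \<in> EE G"
    using a' by (intro adjI[of _ pt]) (auto simp: O0 pt_def)
  then show ?case using snoc.IH[OF a'] by (meson rtrancl_into_rtrancl)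
qed

lemma conn_merge: "b \<in> inodes Tp \<Longrightarrow> ((True, b), (False, [])) \<in> (EE G)\<^sup>*"
proof (induction b rule: rev_induct)
  case Nil
  have "((True, []), (False, [])) \<in> EE G"
    using Nil by (intro adjI[of _ PC]) (auto simp: O0 N0s)
  then show ?case by simp
next
  case (snoc x b')
  have b': "b' \<in> inodes Tp" using parent_in[of "b' @ [x]" Tp] snoc.prems by simp
  have "((True, b' @ [x]), (True, b')) \<in> EE G"
    using snoc.prems by (intro adjI[of _ PC]) (auto simp: O0 N0s mergein_def)
  then show ?case using snoc.IH[OF b'] by (meson converse_rtrancl_into_rtrancl)
qed

lemma comp0: "num_components G \<le> 1"
proof -
  have r0: "(False, []) \<in> sd_verts G" using nonleaf_root[OF TmL] by (simp add: verts)
  have cov: "\<forall>v\<in>sd_verts G. \<exists>t\<in>{(False, [])}. (v, t) \<in> comprel G"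
  proof
    fix v assume v: "v \<in> sd_verts G"
    have "(v, (False, [])) \<in> (EE G)\<^sup>*"
      using v unfolding verts using conn_merge conn_split EE_sym by blast
    then show "\<exists>t\<in>{(False, [])}. (v, t) \<in> comprel G" using v r0 by (auto simp: comprel_EE)
  qed
  have "card (sd_verts G // comprel G) \<le> card {(False, []::bool list)}"
    by (rule card_quot_le[OF comprel_equiv _ cov]) simp
  moreover have "sd_loops G = {#}" using TmL by (simp add: D0_def)
  ultimately show ?thesis by (simp add: num_components_def)
qed

end


definition Inv :: "nat \<Rightarrow> sd \<Rightarrow> bool" where
  "Inv n D \<longleftrightarrow> WF D \<and> 2 * num_components D + card (sd_verts D) \<le> 2 * n
     \<and> label_sum D * 2 ^ (card (sd_verts D) div 2) \<le> 2 ^ (n - 1)"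

lemma step_inv: assumes inv: "Inv n D" and st: "rule1_step D D'" shows "Inv n D'"
proof -
  obtain m s where hms: "m \<in> sd_verts D" "fst m" "s \<in> sd_verts D" "\<not> fst s"
    "sd_nxt D (m, PC) = (s, PC)" and D': "D' = rule1_res D m s"
    using st unfolding rule1_step_def by blast
  have wf: "WF D" using inv by (simp add: Inv_def)
  interpret stp D m s using wf hms by unfold_locales
  have sub: "{m, s} \<subseteq> sd_verts D" using hms by simp
  have c2: "card {m, s} = 2" using ms by simp
  have cv: "card (sd_verts D') = card (sd_verts D) - 2"
    unfolding D' r1_verts using card_Diff_subset[OF _ sub] c2 by simp
  have cv2: "card (sd_verts D) \<ge> 2"
    using card_mono[OF fin sub] c2 by simp
  have c1: "num_components D' \<le> num_components D + 1" unfolding D' by (rule comp)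
  have l1: "label_sum D' \<le> 2 * label_sum D" unfolding D' using labsum y_le by simp
  define k where "k = card (sd_verts D) div 2"
  have k1: "k \<ge> 1" using cv2 k_def by simp
  have k2: "card (sd_verts D') div 2 = k - 1" using cv cv2 k_def by simp
  have A: "2 * num_components D' + card (sd_verts D') \<le> 2 * n"
    using inv c1 cv cv2 unfolding Inv_def by linarith
  have "label_sum D' * 2 ^ (k - 1) \<le> 2 * label_sum D * 2 ^ (k - 1)"
    using l1 by simp
  also have "\<dots> = label_sum D * 2 ^ k" using k1
    by (metis (no_types, lifting) Suc_diff_le diff_Suc_1 mult.assoc mult.commute power_Suc)
  also have "\<dots> \<le> 2 ^ (n - 1)" using inv k_def by (simp add: Inv_def)
  finally have B: "label_sum D' * 2 ^ (card (sd_verts D') div 2) \<le> 2 ^ (n - 1)" using k2 by simp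
  show ?thesis using A B WF' D' by (simp add: Inv_def)
qed

lemma init_inv:
  assumes "n \<ge> 1" "nleaves Tm = n" "nleaves Tp = n" "bij_betw \<sigma> {1..n} {1..n}"
  shows "Inv n (D0 Tm Tp \<sigma>)"
proof (cases "n = 1")
  case True
  have "Tm = Leaf"
  proof (cases Tm)
    case (Node l r)
    then have "nleaves Tm \<ge> 2" using nleaves_Node by simp
    then show ?thesis using assms(2) True by simp
  qed simp
  moreover have "Tp = Leaf"
  proof (cases Tp)
    case (Node l r)
    then have "nleaves Tp \<ge> 2" using nleaves_Node by simp
    then show ?thesis using assms(3) True by simp
  qed simp
  ultimately have v: "sd_verts (D0 Tm Tp \<sigma>) = {}" "sd_loops (D0 Tm Tp \<sigma>) = {#1#}"
    by (simp_all add: D0_def)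
  have o: "outports (D0 Tm Tp \<sigma>) = {}" "inports (D0 Tm Tp \<sigma>) = {}"
    using v by (auto simp: outports_def inports_def)
  show ?thesis using v o True
    by (simp add: Inv_def WF_def num_components_def label_sum_def quotient_def bij_betw_def)
next
  case False
  then have n2: "n \<ge> 2" using assms(1) by simp
  interpret d0 Tm Tp \<sigma> n using n2 assms by unfold_locales
  show ?thesis using WF0 comp0 card_verts lab0 n2 by (simp add: Inv_def)
qed

theorem mainTheorem1:
  fixes Tm Tp :: btree and \<sigma> :: "nat \<Rightarrow> nat" and n :: nat and D :: sd
  assumes "n \<ge> 1"
    and "nleaves Tm = n" and "nleaves Tp = n"
    and "bij_betw \<sigma> {1..n} {1..n}"
    and "rule1_step\<^sup>*\<^sup>* (D0 Tm Tp \<sigma>) D"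
    and "terminal D"
  shows "num_components D \<le> n \<and> label_sum D \<le> 2 ^ (n - 1)"
proof -
  have "Inv n D" using assms(5)
  proof (induction rule: rtranclp_induct)
    case base then show ?case using init_inv assms(1-4) by blast
  next
    case (step x z) then show ?case using step_inv by blast
  qed
  then have a: "2 * num_components D \<le> 2 * n" and
    b: "label_sum D * 2 ^ (card (sd_verts D) div 2) \<le> 2 ^ (n - 1)" by (auto simp: Inv_def)
  have "label_sum D \<le> label_sum D * 2 ^ (card (sd_verts D) div 2)" by simp
  then show ?thesis using a b by linarith
qed


end
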